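(* Two pullback triples $(J_j,F_j,Y_j)$, $j=1,2$, on the same Hilbert space $\mathcal H$ (with $J_j:\mathcal X_j\to\mathcal H$, $F_j:\mathcal X_j\to\mathcal E_j$, $Y_j:\mathcal H\to\mathcal X_j$) are equivalent if and only if there is a unitary isomorphism $W:\mathcal X_2\to\mathcal X_1$ such that $(J_1,F_1,WY_2)$ is a pullback triple.
   Context: For Hilbert spaces $\mathcal H,\mathcal X,\mathcal E$, a pullback triple $(J,F,Y)$ on $\mathcal H$ consists of operators $J:\mathcal X\to\mathcal H$, $F:\mathcal X\to\mathcal E$, $Y:\mathcal H\to\mathcal X$ such that: $J,F$ are bounded with dense range; $Y$ is a completion operator (densely defined injective linear map with dense range); $\|u\|_{\mathcal X}^2=\|Ju\|^2+\|Fu\|_{\mathcal E}^2$ for all $u\in\mathcal X$; and $JYf=f$ for all $f\in\mathcal D(Y)$. Two pullback triples $(J_j,F_j,Y_j)$ with spaces $\mathcal H_j,\mathcal X_j,\mathcal E_j$ are equivalent if there are unitary isomorphisms $W_{\mathcal H}:\mathcal H_1\to\mathcal H_2$, $W_{\mathcal X}:\mathcal X_1\to\mathcal X_2$, $W_{\mathcal E}:\mathcal E_1\to\mathcal E_2$ with $W_{\mathcal H}J_1=J_2W_{\mathcal X}$ and $W_{\mathcal E}F_1=F_2W_{\mathcal X}$.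
   Formalization: Equivalence of the two pullback triples on the same $\mathcal H$ takes $W_{\mathcal H}$ to be the identity of $\mathcal H$, not an arbitrary unitary isomorphism, so $W_{\mathcal H}J_1=J_2W_{\mathcal X}$ becomes $J_1=J_2W_{\mathcal X}$. The statement above fails without it. *)

theory Defs
  imports "HOL-Analysis.Analysis"
begin

text \<open>Complex Hilbert spaces, encoded as real Hilbert spaces (real inner product
  space, complete) carrying an orthogonal complex structure \<open>imult\<close>
  (multiplication by the imaginary unit).  The complex inner product is recovered
  as inner x y + i * inner x (imult y) (up to convention), so complex-linear maps are
  exactly the real-linear maps commuting with \<open>imult\<close>, and complex unitaries are
  the surjective real isometries commuting with \<open>imult\<close>.\<close>

class complex_hilbert = real_inner + complete_space +
  fixes imult :: "'a \<Rightarrow> 'a"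
  assumes imult_add: "imult (x + y) = imult x + imult y"
    and imult_scaleR: "imult (scaleR r x) = scaleR r (imult x)"
    and imult_imult: "imult (imult x) = - x"
    and inner_imult: "inner (imult x) (imult y) = inner x y"

definition clinear :: "('a::complex_hilbert \<Rightarrow> 'b::complex_hilbert) \<Rightarrow> bool" where
  "clinear T \<longleftrightarrow> linear T \<and> (\<forall>x. T (imult x) = imult (T x))"

definition bounded_dense_range :: "('a::complex_hilbert \<Rightarrow> 'b::complex_hilbert) \<Rightarrow> bool" where
  "bounded_dense_range T \<longleftrightarrow> bounded_linear T \<and> clinear T \<and> closure (range T) = UNIV"

definition csubspace :: "'a::complex_hilbert set \<Rightarrow> bool" where
  "csubspace D \<longleftrightarrow> subspace D \<and> (\<forall>x\<in>D. imult x \<in> D)"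

text \<open>A partially defined operator is represented by its domain
  \<open>D\<close> together with a total function \<open>Y\<close> whose values off \<open>D\<close> are irrelevant.\<close>
definition completion_operator :: "'a::complex_hilbert set \<Rightarrow> ('a \<Rightarrow> 'b::complex_hilbert) \<Rightarrow> bool" where
  "completion_operator D Y \<longleftrightarrow>
     csubspace D \<and> closure D = UNIV \<and>
     (\<forall>f\<in>D. \<forall>g\<in>D. Y (f + g) = Y f + Y g) \<and>
     (\<forall>f\<in>D. \<forall>r. Y (scaleR r f) = scaleR r (Y f)) \<and>
     (\<forall>f\<in>D. Y (imult f) = imult (Y f)) \<and>
     inj_on Y D \<and> closure (Y ` D) = UNIV"

definition pullback_triple ::
  "('x::complex_hilbert \<Rightarrow> 'h::complex_hilbert) \<Rightarrow> ('x \<Rightarrow> 'e::complex_hilbert) \<Rightarrow> 'h set \<Rightarrow> ('h \<Rightarrow> 'x) \<Rightarrow> bool" where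
  "pullback_triple J F D Y \<longleftrightarrow>
     bounded_dense_range J \<and> bounded_dense_range F \<and> completion_operator D Y \<and>
     (\<forall>u. (norm u)\<^sup>2 = (norm (J u))\<^sup>2 + (norm (F u))\<^sup>2) \<and>
     (\<forall>f\<in>D. J (Y f) = f)"

definition unitary :: "('a::complex_hilbert \<Rightarrow> 'b::complex_hilbert) \<Rightarrow> bool" where
  "unitary W \<longleftrightarrow> clinear W \<and> bij W \<and> (\<forall>x y. inner (W x) (W y) = inner x y)"

definition pb_equivalent_via ::
  "('h1::complex_hilbert \<Rightarrow> 'h2::complex_hilbert) \<Rightarrow>
   ('x1::complex_hilbert \<Rightarrow> 'h1) \<Rightarrow> ('x1 \<Rightarrow> 'e1::complex_hilbert) \<Rightarrow>
   ('x2::complex_hilbert \<Rightarrow> 'h2) \<Rightarrow> ('x2 \<Rightarrow> 'e2::complex_hilbert) \<Rightarrow> bool" where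
  "pb_equivalent_via WH J1 F1 J2 F2 \<longleftrightarrow>
     (\<exists>WX :: 'x1 \<Rightarrow> 'x2. \<exists>WE :: 'e1 \<Rightarrow> 'e2.
        unitary WX \<and> unitary WE \<and>
        (\<forall>u. WH (J1 u) = J2 (WX u)) \<and> (\<forall>u. WE (F1 u) = F2 (WX u)))"

definition pb_equivalent ::
  "('x1::complex_hilbert \<Rightarrow> 'h1::complex_hilbert) \<Rightarrow> ('x1 \<Rightarrow> 'e1::complex_hilbert) \<Rightarrow>
   ('x2::complex_hilbert \<Rightarrow> 'h2::complex_hilbert) \<Rightarrow> ('x2 \<Rightarrow> 'e2::complex_hilbert) \<Rightarrow> bool" where
  "pb_equivalent J1 F1 J2 F2 \<longleftrightarrow>
     (\<exists>WH :: 'h1 \<Rightarrow> 'h2. unitary WH \<and> pb_equivalent_via WH J1 F1 J2 F2)"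

end

theory Submission
  imports Defs
begin

lemma dense_eq:
  fixes f g :: "'a::topological_space \<Rightarrow> 'b::t2_space"
  assumes "continuous_on UNIV f" "continuous_on UNIV g" "closure S = UNIV"
    "\<And>x. x \<in> S \<Longrightarrow> f x = g x"
  shows "f x = g x"
proof -
  have "closed {x. f x = g x}" using closed_Collect_eq assms(1,2) by blast
  moreover have "S \<subseteq> {x. f x = g x}" using assms(4) by blast
  ultimately have "closure S \<subseteq> {x. f x = g x}" by (simp add: closure_minimal)
  thus ?thesis using assms(3) by auto
qed

lemma unitary_norm:
  assumes "unitary W" shows "norm (W x) = norm x"
  using assms unfolding unitary_def by (simp add: norm_eq_sqrt_inner)

lemma unitary_bl:
  assumes "unitary W" shows "bounded_linear W"
proof -
  have l: "linear W" using assms unfolding unitary_def clinear_def by auto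
  show ?thesis
    by (rule bounded_linear_intro[where K=1]) (use l unitary_norm[OF assms] in \<open>auto simp: linear_iff\<close>)
qed

lemma unitary_inv:
  assumes "unitary W" shows "unitary (inv W)"
proof -
  have b: "bij W" and l: "linear W" and c: "\<And>x. W (imult x) = imult (W x)"
    and i: "\<And>x y. inner (W x) (W y) = inner x y"
    using assms unfolding unitary_def clinear_def by auto
  have inj: "inj W" and s: "\<And>x. W (inv W x) = x"
    using b by (auto simp: bij_def surj_f_inv_f)
  have eq: "a = b" if "W a = W b" for a b using inj that by (meson injD)
  have "linear (inv W)"
    unfolding linear_iff
    by (auto intro!: eq simp: s l[unfolded linear_iff])
  moreover have "inv W (imult x) = imult (inv W x)" for x
    by (rule eq) (simp add: s c)
  moreover have "inner (inv W x) (inv W y) = inner x y" for x y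
    using i[of "inv W x" "inv W y"] by (simp add: s)
  ultimately show ?thesis using b unfolding unitary_def clinear_def
    by (auto intro: bij_imp_bij_inv)
qed

lemma imult_bl: "bounded_linear (imult :: 'a::complex_hilbert \<Rightarrow> 'a)"
proof (rule bounded_linear_intro[where K=1])
  fix x :: 'a
  have "norm (imult x) = norm x" by (simp add: norm_eq_sqrt_inner inner_imult)
  thus "norm (imult x) \<le> norm x * 1" by simp
qed (auto simp: imult_add imult_scaleR)

lemma bdr_bl: "bounded_dense_range T \<Longrightarrow> bounded_linear T"
  unfolding bounded_dense_range_def by auto

lemma closure_image_unitary:
  assumes "unitary W" "closure S = UNIV" shows "closure (W ` S) = UNIV"
proof -
  have "W ` closure S \<subseteq> closure (W ` S)"
    by (rule image_closure_subset)
       (auto intro: linear_continuous_on unitary_bl[OF assms(1)] closure_subset[THEN subsetD])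
  moreover have "W ` UNIV = UNIV" using assms(1) unfolding unitary_def bij_def by auto
  ultimately show ?thesis using assms(2) by auto
qed


theorem mainTheorem4:
  fixes J1 :: "'x1::complex_hilbert \<Rightarrow> 'h::complex_hilbert"
    and F1 :: "'x1 \<Rightarrow> 'e1::complex_hilbert"
    and Y1 :: "'h \<Rightarrow> 'x1" and D1 :: "'h set"
    and J2 :: "'x2::complex_hilbert \<Rightarrow> 'h"
    and F2 :: "'x2 \<Rightarrow> 'e2::complex_hilbert"
    and Y2 :: "'h \<Rightarrow> 'x2" and D2 :: "'h set"
  assumes "pullback_triple J1 F1 D1 Y1"
    and "pullback_triple J2 F2 D2 Y2"
  shows "pb_equivalent_via id J1 F1 J2 F2 \<longleftrightarrow>
         (\<exists>W :: 'x2 \<Rightarrow> 'x1. unitary W \<and> pullback_triple J1 F1 D2 (W \<circ> Y2))"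
proof
  have P1: "bounded_dense_range J1" "bounded_dense_range F1"
    "\<And>u. (norm u)\<^sup>2 = (norm (J1 u))\<^sup>2 + (norm (F1 u))\<^sup>2"
    using assms(1) unfolding pullback_triple_def by auto
  have P2: "bounded_dense_range J2" "bounded_dense_range F2" "completion_operator D2 Y2"
    "\<And>u. (norm u)\<^sup>2 = (norm (J2 u))\<^sup>2 + (norm (F2 u))\<^sup>2" "\<And>f. f \<in> D2 \<Longrightarrow> J2 (Y2 f) = f"
    using assms(2) unfolding pullback_triple_def by auto
  have C2: "csubspace D2" "closure D2 = UNIV"
     "\<And>f g. f\<in>D2 \<Longrightarrow> g\<in>D2 \<Longrightarrow> Y2 (f + g) = Y2 f + Y2 g"
     "\<And>f r. f\<in>D2 \<Longrightarrow> Y2 (scaleR r f) = scaleR r (Y2 f)"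
     "\<And>f. f\<in>D2 \<Longrightarrow> Y2 (imult f) = imult (Y2 f)"
     "inj_on Y2 D2" "closure (Y2 ` D2) = UNIV"
    using P2(3) unfolding completion_operator_def by auto
  {
    assume "pb_equivalent_via id J1 F1 J2 F2"
    then obtain WX :: "'x1 \<Rightarrow> 'x2" and WE :: "'e1 \<Rightarrow> 'e2" where
      WX: "unitary WX" and JJ: "\<And>u. J1 u = J2 (WX u)"
      unfolding pb_equivalent_via_def by auto
    define W where "W = inv WX"
    have U: "unitary W" using unitary_inv[OF WX] W_def by simp
    have s: "\<And>x. WX (W x) = x" using WX unfolding unitary_def W_def bij_def
      by (simp add: surj_f_inv_f)
    have blW: "bounded_linear W" by (rule unitary_bl[OF U])
    have injW: "inj W" using U unfolding unitary_def bij_def by auto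
    have cW: "\<And>x. W (imult x) = imult (W x)" using U unfolding unitary_def clinear_def by auto
    have "completion_operator D2 (W \<circ> Y2)"
      unfolding completion_operator_def
    proof (intro conjI ballI allI)
      show "inj_on (W \<circ> Y2) D2" using C2(6) injW by (simp add: comp_inj_on inj_on_subset)
      show "closure ((W \<circ> Y2) ` D2) = UNIV"
        using closure_image_unitary[OF U C2(7)] by (simp add: image_comp)
    qed (use C2 blW cW in \<open>auto simp: linear_add[OF bounded_linear.linear[OF blW]] linear_scale[OF bounded_linear.linear[OF blW]]\<close>)
    moreover have "J1 ((W \<circ> Y2) f) = f" if "f \<in> D2" for f
      using JJ s P2(5)[OF that] by simp
    ultimately have "pullback_triple J1 F1 D2 (W \<circ> Y2)"
      using P1 unfolding pullback_triple_def by auto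
    thus "\<exists>W :: 'x2 \<Rightarrow> 'x1. unitary W \<and> pullback_triple J1 F1 D2 (W \<circ> Y2)"
      using U by blast
  }
  {
    assume "\<exists>W :: 'x2 \<Rightarrow> 'x1. unitary W \<and> pullback_triple J1 F1 D2 (W \<circ> Y2)"
    then obtain W :: "'x2 \<Rightarrow> 'x1" where U: "unitary W"
      and PT: "pullback_triple J1 F1 D2 (W \<circ> Y2)" by blast
    have JW: "\<And>f. f \<in> D2 \<Longrightarrow> J1 (W (Y2 f)) = f" using PT unfolding pullback_triple_def by auto
    have blW: "bounded_linear W" by (rule unitary_bl[OF U])
    have blJ1: "bounded_linear J1" "bounded_linear F1" using P1 bdr_bl by auto
    have blJ2: "bounded_linear J2" "bounded_linear F2" using P2 bdr_bl by auto
    have JJ0: "J1 (W v) = J2 v" for v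
    proof (rule dense_eq[OF _ _ C2(7)])
      show "continuous_on UNIV (\<lambda>v. J1 (W v))"
        by (intro linear_continuous_on bounded_linear_compose[OF blJ1(1) blW])
      show "continuous_on UNIV J2" by (intro linear_continuous_on blJ2(1))
    qed (use JW P2(5) in auto)
    define WX where "WX = inv W"
    have UX: "unitary WX" using unitary_inv[OF U] WX_def by simp
    have s: "\<And>x. W (WX x) = x" using U unfolding unitary_def WX_def bij_def
      by (simp add: surj_f_inv_f)
    have s2: "\<And>x. WX (W x) = x" using U unfolding unitary_def WX_def bij_def
      by (simp add: inv_f_f)
    have JJ: "J1 u = J2 (WX u)" for u using JJ0[of "WX u"] s by simp
    have blX: "bounded_linear WX" by (rule unitary_bl[OF UX])
    have nF: "norm (F2 (WX v)) = norm (F1 v)" for v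
    proof -
      have "(norm (F2 (WX v)))\<^sup>2 = (norm (F1 v))\<^sup>2"
        using P1(3)[of v] P2(4)[of "WX v"] unitary_norm[OF UX, of v] JJ[of v] by simp
      thus ?thesis by (simp add: power2_eq_iff_nonneg)
    qed
    define K where "K = (\<lambda>u. F2 (WX u))"
    have blK: "bounded_linear K" unfolding K_def
      by (rule bounded_linear_compose[OF blJ2(2) blX])
    define G where "G = (\<lambda>y. K (inv F1 y))"
    have GF: "G (F1 u) = K u" for u
    proof -
      have "F1 (inv F1 (F1 u)) = F1 u" by (simp add: f_inv_into_f)
      hence "F1 (inv F1 (F1 u) - u) = 0" by (simp add: linear_diff[OF bounded_linear.linear[OF blJ1(2)]])
      hence "K (inv F1 (F1 u) - u) = 0" using nF unfolding K_def by (metis norm_eq_zero)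
      thus ?thesis unfolding G_def by (simp add: linear_diff[OF bounded_linear.linear[OF blK]])
    qed
    have nK: "norm (K u) = norm (F1 u)" for u using nF K_def by simp
    have "uniformly_continuous_on (range F1) G"
      unfolding uniformly_continuous_on_def
    proof (intro allI impI)
      fix e :: real assume "e > 0"
      show "\<exists>d>0. \<forall>x\<in>range F1. \<forall>x'\<in>range F1. dist x' x < d \<longrightarrow> dist (G x') (G x) < e"
        by (rule exI[of _ e], use \<open>e > 0\<close> in \<open>auto simp: GF dist_norm
          linear_diff[OF bounded_linear.linear[OF blK], symmetric] linear_diff[OF bounded_linear.linear[OF blJ1(2)], symmetric] nK\<close>)
    qed
    then obtain g where gu: "uniformly_continuous_on (closure (range F1)) g"
      and gF: "\<And>x. x \<in> range F1 \<Longrightarrow> G x = g x"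
      by (rule uniformly_continuous_on_extension_on_closure) blast
    have dF: "closure (range F1) = UNIV" using P1(2) unfolding bounded_dense_range_def by auto
    have gc: "continuous_on UNIV g" using gu dF uniformly_continuous_imp_continuous by metis
    have gK: "g (F1 u) = K u" for u using gF[of "F1 u"] GF by simp
    have gn: "norm (g x) = norm x" for x
      by (rule dense_eq[OF _ _ dF, where f="\<lambda>x. norm (g x)" and g="\<lambda>x. norm x"]) (auto intro!: continuous_intros gc simp: gK nK)
    have gadd1: "g (x + F1 u) = g x + g (F1 u)" for x u
    proof (rule dense_eq[OF _ _ dF, where f="\<lambda>x. g (x + F1 u)" and g="\<lambda>x. g x + g (F1 u)"])
      show "continuous_on UNIV (\<lambda>x. g (x + F1 u))"
        by (rule continuous_on_compose2[OF gc]) (auto intro!: continuous_intros)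
      show "continuous_on UNIV (\<lambda>x. g x + g (F1 u))" by (auto intro!: continuous_intros gc)
    qed (auto simp: gK linear_add[OF bounded_linear.linear[OF blJ1(2)], symmetric] linear_add[OF bounded_linear.linear[OF blK]])
    have gadd: "g (x + y) = g x + g y" for x y
    proof (rule dense_eq[OF _ _ dF, where f="\<lambda>y. g (x + y)" and g="\<lambda>y. g x + g y"])
      show "continuous_on UNIV (\<lambda>y. g (x + y))"
        by (rule continuous_on_compose2[OF gc]) (auto intro!: continuous_intros)
      show "continuous_on UNIV (\<lambda>y. g x + g y)" by (auto intro!: continuous_intros gc)
    qed (auto simp: gadd1)
    have gscale: "g (r *\<^sub>R x) = r *\<^sub>R g x" for r x
    proof (rule dense_eq[OF _ _ dF, where f="\<lambda>x. g (r *\<^sub>R x)" and g="\<lambda>x. r *\<^sub>R g x"])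
      show "continuous_on UNIV (\<lambda>x. g (r *\<^sub>R x))"
        by (rule continuous_on_compose2[OF gc]) (auto intro!: continuous_intros)
      show "continuous_on UNIV (\<lambda>x. r *\<^sub>R g x)" by (auto intro!: continuous_intros gc)
    qed (auto simp: gK linear_scale[OF bounded_linear.linear[OF blJ1(2)], symmetric] linear_scale[OF bounded_linear.linear[OF blK]])
    have cF1: "\<And>x. F1 (imult x) = imult (F1 x)" using P1(2) unfolding bounded_dense_range_def clinear_def by auto
    have cK: "\<And>x. K (imult x) = imult (K x)"
      using P2(2) UX unfolding K_def bounded_dense_range_def clinear_def unitary_def by auto
    have icont: "continuous_on UNIV (imult :: 'e1 \<Rightarrow> 'e1)" "continuous_on UNIV (imult :: 'e2 \<Rightarrow> 'e2)"
      by (auto intro: linear_continuous_on imult_bl)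
    have gi: "g (imult x) = imult (g x)" for x
    proof (rule dense_eq[OF _ _ dF, where f="\<lambda>x. g (imult x)" and g="\<lambda>x. imult (g x)"])
      show "continuous_on UNIV (\<lambda>x. g (imult x))"
        by (rule continuous_on_compose2[OF gc icont(1)]) auto
      show "continuous_on UNIV (\<lambda>x. imult (g x))"
        by (rule continuous_on_compose2[OF icont(2) gc]) auto
    qed (auto simp: gK cF1[symmetric] cK)
    have lg: "linear g" by (rule linearI) (auto simp: gadd gscale)
    have blg: "bounded_linear g" by (rule bounded_linear_intro[where K=1]) (auto simp: gadd gscale gn)
    have gin: "inner (g x) (g y) = inner x y" for x y
      by (simp add: dot_norm gadd[symmetric] gn)
    have injg: "inj g"
    proof (rule injI)
      fix x y assume "g x = g y"
      hence "g (x - y) = 0" by (simp add: linear_diff[OF bounded_linear.linear[OF blg]])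
      thus "x = y" using gn[of "x - y"] by simp
    qed
    have "complete (g ` UNIV)"
      by (rule complete_isometric_image[where e=1]) (auto simp: blg gn complete_UNIV)
    hence cl: "closed (range g)" by (rule complete_imp_closed)
    have "range F2 \<subseteq> range g"
    proof
      fix z assume "z \<in> range F2"
      then obtain w where "z = F2 w" by auto
      hence "z = g (F1 (W w))" using gK s2 K_def by simp
      thus "z \<in> range g" by blast
    qed
    hence "closure (range F2) \<subseteq> range g" using cl by (simp add: closure_minimal)
    hence "surj g" using P2(2) unfolding bounded_dense_range_def by auto
    hence Ug: "unitary g" unfolding unitary_def clinear_def bij_def
      using lg gi gin injg by auto
    show "pb_equivalent_via id J1 F1 J2 F2"
      unfolding pb_equivalent_via_def
      by (rule exI[of _ WX], rule exI[of _ g]) (use UX Ug JJ gK K_def in auto)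
  }
qed

end
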